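(* Let $k_1,k_2,k_3$ be positive integers and let $D$ be a Hamiltonian digraph containing no subdivision of $B(k_1,k_2;k_3)$ as a subdigraph. Then $\chi(D)\le 4k$, where $k=\max\{k_1,k_2,k_3\}$.
   Context: Digraphs are orientations of finite simple graphs (no loops, no multiple arcs, no pair of opposite arcs). $\chi(D)$ is the chromatic number of the underlying undirected graph. A digraph is Hamiltonian if it contains a directed cycle through all its vertices. The $(2+1)$-bispindle $B(k_1,k_2;k_3)$ is the union of two directed $xy$-paths of lengths $k_1$ and $k_2$ and one directed $yx$-path of length $k_3$, these three paths being pairwise internally disjoint. A subdivision of a digraph $H$ is obtained by replacing each arc $(u,v)$ by a directed $uv$-path of length at least $1$, these paths being internally disjoint. *)

theory Defs
  imports Main
begin

definition digraph :: "'a set \<Rightarrow> ('a \<times> 'a) set \<Rightarrow> bool" where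
  "digraph V A \<longleftrightarrow> finite V \<and> A \<subseteq> V \<times> V \<and>
     (\<forall>v. (v, v) \<notin> A) \<and> (\<forall>u v. (u, v) \<in> A \<longrightarrow> (v, u) \<notin> A)"

definition proper_colouring :: "'a set \<Rightarrow> ('a \<times> 'a) set \<Rightarrow> ('a \<Rightarrow> nat) \<Rightarrow> nat \<Rightarrow> bool" where
  "proper_colouring V A c k \<longleftrightarrow> (\<forall>v\<in>V. c v < k) \<and> (\<forall>(u, v)\<in>A. c u \<noteq> c v)"

definition chromatic_number :: "'a set \<Rightarrow> ('a \<times> 'a) set \<Rightarrow> nat" where
  "chromatic_number V A = (LEAST k. \<exists>c. proper_colouring V A c k)"

definition hamiltonian :: "'a set \<Rightarrow> ('a \<times> 'a) set \<Rightarrow> bool" where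
  "hamiltonian V A \<longleftrightarrow> (\<exists>vs. vs \<noteq> [] \<and> distinct vs \<and> set vs = V \<and>
     (\<forall>i < length vs. (vs ! i, vs ! ((i + 1) mod length vs)) \<in> A))"

definition dpath :: "('a \<times> 'a) set \<Rightarrow> 'a list \<Rightarrow> 'a \<Rightarrow> 'a \<Rightarrow> bool" where
  "dpath A p x y \<longleftrightarrow> p \<noteq> [] \<and> distinct p \<and> hd p = x \<and> last p = y \<and>
     (\<forall>i. Suc i < length p \<longrightarrow> (p ! i, p ! Suc i) \<in> A)"

definition plen :: "'a list \<Rightarrow> nat" where
  "plen p = length p - 1"

definition inner :: "'a list \<Rightarrow> 'a set" where
  "inner p = set (butlast (tl p))"

text \<open>D contains a subdivision of the (2+1)-bispindle B(k1,k2;k3) as a subdigraph: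
  a subdivision of B(k1,k2;k3) replaces each of its arcs by a path of length at least 1,
  so it consists of two distinct directed xy-paths of lengths at least k1, k2 and one directed
  yx-path of length at least k3, pairwise internally disjoint. (The two xy-paths must be
  distinct subgraphs, which matters only when both are single arcs.)\<close>
definition contains_bispindle_subdivision ::
  "'a set \<Rightarrow> ('a \<times> 'a) set \<Rightarrow> nat \<Rightarrow> nat \<Rightarrow> nat \<Rightarrow> bool" where
  "contains_bispindle_subdivision V A k1 k2 k3 \<longleftrightarrow>
     (\<exists>x y P1 P2 P3. x \<in> V \<and> y \<in> V \<and> x \<noteq> y \<and>
        dpath A P1 x y \<and> dpath A P2 x y \<and> dpath A P3 y x \<and> P1 \<noteq> P2 \<and>
        plen P1 \<ge> k1 \<and> plen P2 \<ge> k2 \<and> plen P3 \<ge> k3 \<and>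
        inner P1 \<inter> inner P2 = {} \<and> inner P1 \<inter> inner P3 = {} \<and>
        inner P2 \<inter> inner P3 = {})"

end

theory Submission imports Defs begin

definition HC :: "('a \<times> 'a) set \<Rightarrow> 'a list \<Rightarrow> bool" where
  "HC A vs \<longleftrightarrow> vs \<noteq> [] \<and> distinct vs \<and>
     (\<forall>i < length vs. (vs ! i, vs ! ((i + 1) mod length vs)) \<in> A)"

declare upt_Suc[simp del]

lemma dpath_iff:
  "dpath A p x y \<longleftrightarrow> p \<noteq> [] \<and> distinct p \<and> hd p = x \<and> last p = y \<and>
     successively (\<lambda>u v. (u, v) \<in> A) p"
  unfolding dpath_def successively_conv_nth by blast

lemma HC_arc:
  assumes "HC A vs" "Suc i < length vs"
  shows "(vs ! i, vs ! Suc i) \<in> A"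
proof -
  have h: "\<And>j. j < length vs \<Longrightarrow> (vs ! j, vs ! ((j + 1) mod length vs)) \<in> A" using assms(1) unfolding HC_def by blast
  have "(vs ! i, vs ! ((i + 1) mod length vs)) \<in> A" using h[of i] assms(2) by simp
  moreover have "(i + 1) mod length vs = Suc i" using assms(2) by simp
  ultimately show ?thesis by simp
qed

lemma HC_last_arc:
  assumes "HC A vs"
  shows "(vs ! (length vs - 1), vs ! 0) \<in> A"
proof -
  have "length vs > 0" using assms unfolding HC_def by simp
  have h: "\<And>j. j < length vs \<Longrightarrow> (vs ! j, vs ! ((j + 1) mod length vs)) \<in> A" using assms(1) unfolding HC_def by blast
  have "(vs ! (length vs - 1), vs ! ((length vs - 1 + 1) mod length vs)) \<in> A"
    using h[of "length vs - 1"] \<open>length vs > 0\<close> by simp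
  moreover have "(length vs - 1 + 1) mod length vs = 0" using \<open>length vs > 0\<close> by simp
  ultimately show ?thesis by simp
qed

lemma succ_seg:
  assumes "HC A vs" "j < length vs"
  shows "successively (\<lambda>u v. (u, v) \<in> A) (map ((!) vs) [i..<Suc j])"
  unfolding successively_conv_nth
proof (intro allI impI)
  fix t assume t: "Suc t < length (map ((!) vs) [i..<Suc j])"
  then have "Suc (i + t) < length vs" using assms(2) by simp
  then show "(map ((!) vs) [i..<Suc j] ! t, map ((!) vs) [i..<Suc j] ! Suc t) \<in> A"
    using t HC_arc[OF assms(1)] by simp
qed

lemma seg_distinct:
  assumes "distinct vs" "j \<le> length vs"
  shows "distinct (map ((!) vs) [i..<j])"
  using assms by (simp add: distinct_map inj_on_nth)

lemma nth_notin_seg: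
  assumes "distinct vs" "i < length vs" "j \<le> length vs" "i \<notin> {a..<j}"
  shows "vs ! i \<notin> (!) vs ` {a..<j}"
proof
  assume "vs ! i \<in> (!) vs ` {a..<j}"
  then obtain x where x: "x \<in> {a..<j}" "vs ! i = vs ! x" by auto
  then have "i = x" using assms nth_eq_iff_index_eq[of vs i x] by auto
  then show False using x assms by auto
qed

lemma seg_set: "set (map ((!) vs) [i..<j]) = (!) vs ` {i..<j}"
  by simp

lemma inner_eq:
  assumes "distinct Q" "length Q \<ge> 2"
  shows "inner Q = set Q - {hd Q, last Q}"
proof -
  obtain a r where Q: "Q = a # r" using assms by (cases Q) auto
  then have "r \<noteq> []" using assms by auto
  then obtain m b where r: "r = m @ [b]" by (cases r rule: rev_cases) auto
  show ?thesis using assms unfolding inner_def Q r by auto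
qed

lemma FB0:
  assumes hc: "HC A vs" and n: "n = length vs"
    and sp: "0 < s" "s < p" "p < q" "q < n"
    and a1: "(vs ! 0, vs ! p) \<in> A" and a2: "(vs ! s, vs ! q) \<in> A"
    and g: "k1 \<le> s + 1" "k2 \<le> q - p + 1" "k3 \<le> n - q"
  shows "contains_bispindle_subdivision (set vs) A k1 k2 k3"
proof -
  have d: "distinct vs" using hc unfolding HC_def by simp
  have inj: "\<And>i j. i < n \<Longrightarrow> j < n \<Longrightarrow> vs ! i = vs ! j \<longleftrightarrow> i = j"
    using d n nth_eq_iff_index_eq by blast
  define P1 where "P1 = map ((!) vs) [0..<Suc s] @ [vs ! q]"
  define P2 where "P2 = vs ! 0 # map ((!) vs) [p..<Suc q]"
  define P3 where "P3 = map ((!) vs) [q..<Suc (n - 1)] @ [vs ! 0]"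
  have s1: "set (map ((!) vs) [0..<Suc s]) = (!) vs ` {0..<Suc s}" by simp
  have s2: "set (map ((!) vs) [p..<Suc q]) = (!) vs ` {p..<Suc q}" by simp
  have s3: "set (map ((!) vs) [q..<Suc (n - 1)]) = (!) vs ` {q..<Suc (n-1)}" by simp
  have dP1: "dpath A P1 (vs ! 0) (vs ! q)"
    unfolding dpath_iff P1_def
  proof (intro conjI)
    have "vs ! q \<notin> (!) vs ` {0..<Suc s}" by (rule nth_notin_seg[OF d]) (use sp n in auto)
    then show "distinct (map ((!) vs) [0..<Suc s] @ [vs ! q])"
      using seg_distinct[OF d, of "Suc s" 0] sp n by (simp only: distinct_append s1) simp
    show "successively (\<lambda>u v. (u, v) \<in> A) (map ((!) vs) [0..<Suc s] @ [vs ! q])"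
      using succ_seg[OF hc, of s 0] sp n a2 by (auto simp: successively_append_iff last_map)
    show "hd (map ((!) vs) [0..<Suc s] @ [vs ! q]) = vs ! 0" by (simp add: hd_map)
  qed simp_all
  have dP2: "dpath A P2 (vs ! 0) (vs ! q)"
    unfolding dpath_iff P2_def
  proof (intro conjI)
    have "vs ! 0 \<notin> (!) vs ` {p..<Suc q}" by (rule nth_notin_seg[OF d]) (use sp n in auto)
    then show "distinct (vs ! 0 # map ((!) vs) [p..<Suc q])"
      using seg_distinct[OF d, of "Suc q" p] sp n by (simp only: distinct.simps s2) simp
    show "successively (\<lambda>u v. (u, v) \<in> A) (vs ! 0 # map ((!) vs) [p..<Suc q])"
      using succ_seg[OF hc, of q p] sp n a1 by (auto simp: successively_Cons hd_map)
    show "last (vs ! 0 # map ((!) vs) [p..<Suc q]) = vs ! q"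
      using sp by (simp add: last_map)
  qed simp_all
  have dP3: "dpath A P3 (vs ! q) (vs ! 0)"
    unfolding dpath_iff P3_def
  proof (intro conjI)
    have "vs ! 0 \<notin> (!) vs ` {q..<Suc (n-1)}" by (rule nth_notin_seg[OF d]) (use sp n in auto)
    then show "distinct (map ((!) vs) [q..<Suc (n - 1)] @ [vs ! 0])"
      using seg_distinct[OF d, of "Suc (n-1)" q] sp n by (simp only: distinct_append s3) simp
    show "successively (\<lambda>u v. (u, v) \<in> A) (map ((!) vs) [q..<Suc (n - 1)] @ [vs ! 0])"
      using succ_seg[OF hc, of "n-1" q] sp n HC_last_arc[OF hc]
      by (auto simp: successively_append_iff last_map)
    show "hd (map ((!) vs) [q..<Suc (n - 1)] @ [vs ! 0]) = vs ! q"
      using sp by (simp add: hd_map)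
  qed simp_all
  have l1: "plen P1 = s + 1" unfolding P1_def plen_def by simp
  have l2: "plen P2 = q - p + 1" unfolding P2_def plen_def using sp by simp
  have l3: "plen P3 = n - q" unfolding P3_def plen_def using sp by simp
  have i1: "inner P1 = (!) vs ` {1..s}"
    unfolding inner_def P1_def butlast_tl using sp
    by (simp add: map_tl[symmetric] atLeastLessThanSuc_atLeastAtMost)
  have i2: "inner P2 = (!) vs ` {p..<q}"
    unfolding inner_def P2_def using sp
    by (simp add: map_butlast[symmetric] upt_Suc_append)
  have i3: "inner P3 = (!) vs ` {q+1..<n}"
    unfolding inner_def P3_def butlast_tl using sp
    by (simp add: map_tl[symmetric])
  have ne: "P1 \<noteq> P2"
  proof
    assume "P1 = P2"
    then have "vs ! s \<in> set P2" unfolding P1_def using sp by auto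
    moreover have "vs ! s \<noteq> vs ! 0" using inj[of s 0] sp n by linarith
    ultimately show False unfolding P2_def using sp n inj by auto
  qed
  have m0: "vs ! 0 \<in> set vs" "vs ! q \<in> set vs" by (rule nth_mem, use sp n in linarith)+
  have xy: "vs ! 0 \<noteq> vs ! q" using inj[of 0 q] sp n by linarith
  show ?thesis unfolding contains_bispindle_subdivision_def
    apply (rule exI[of _ "vs ! 0"], rule exI[of _ "vs ! q"])
    apply (rule exI[of _ P1], rule exI[of _ P2], rule exI[of _ P3])
    using dP1 dP2 dP3 ne l1 l2 l3 g sp n inj m0 xy
    by (auto simp: i1 i2 i3)
qed


lemma HC_rotate:
  assumes "HC A vs"
  shows "HC A (rotate r vs)"
proof -
  let ?n = "length vs"
  have ne: "vs \<noteq> []" and d: "distinct vs" using assms unfolding HC_def by auto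
  have h: "\<And>j. j < ?n \<Longrightarrow> (vs ! j, vs ! ((j + 1) mod ?n)) \<in> A"
    using assms unfolding HC_def by blast
  have "(rotate r vs ! i, rotate r vs ! ((i + 1) mod ?n)) \<in> A" if i: "i < ?n" for i
  proof -
    have np: "?n > 0" using ne by simp
    have e1: "rotate r vs ! i = vs ! ((r + i) mod ?n)" using nth_rotate i by blast
    have e2: "rotate r vs ! ((i + 1) mod ?n) = vs ! ((r + (i + 1) mod ?n) mod ?n)"
      using nth_rotate np by (metis mod_less_divisor)
    have e3: "(r + (i + 1) mod ?n) mod ?n = ((r + i) mod ?n + 1) mod ?n"
      by (simp add: mod_simps add.assoc)
    show ?thesis using h[of "(r + i) mod ?n"] np e1 e2 e3 by simp
  qed
  then show ?thesis using ne d unfolding HC_def by simp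
qed

lemma FBgen:
  assumes hc: "HC A vs" and n: "n = length vs" and b: "b < n"
    and sp: "0 < s" "s < p" "p < q" "q < n"
    and a1: "(vs ! b, vs ! ((b + p) mod n)) \<in> A"
    and a2: "(vs ! ((b + s) mod n), vs ! ((b + q) mod n)) \<in> A"
    and g: "k1 \<le> s + 1" "k2 \<le> q - p + 1" "k3 \<le> n - q"
  shows "contains_bispindle_subdivision (set vs) A k1 k2 k3"
proof -
  let ?us = "rotate b vs"
  have e: "\<And>i. i < n \<Longrightarrow> ?us ! i = vs ! ((b + i) mod n)" using nth_rotate n by blast
  have "contains_bispindle_subdivision (set ?us) A k1 k2 k3"
  proof (rule FB0[where n=n and s=s and p=p and q=q])
    show "HC A ?us" using HC_rotate[OF hc] .
    show "(?us ! 0, ?us ! p) \<in> A" using e[of 0] e[of p] sp b a1 by simp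
    show "(?us ! s, ?us ! q) \<in> A" using e[of s] e[of q] sp a2 by simp
  qed (use n sp g in auto)
  then show ?thesis by simp
qed


definition adj :: "('a \<times> 'a) set \<Rightarrow> 'a \<Rightarrow> 'a \<Rightarrow> bool" where
  "adj A u v \<longleftrightarrow> (u, v) \<in> A \<or> (v, u) \<in> A"

definition nbh :: "('a \<times> 'a) set \<Rightarrow> 'a \<Rightarrow> 'a set" where
  "nbh A v = {w. adj A v w}"

lemma coreF:
  assumes hc: "HC A us" and n: "n = length us" and K: "1 \<le> K"
    and kk: "k1 \<le> K" "k2 \<le> K" "k3 \<le> K"
    and noB: "\<not> contains_bispindle_subdivision (set us) A k1 k2 k3"
    and L: "2 * K \<le> L" "L \<le> n - 2 * K" and aL: "adj A (us ! 0) (us ! L)"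
    and m: "L + K \<le> m" "m \<le> n - L + K" and am: "adj A (us ! K) (us ! m)"
  shows False
proof -
  have mn: "m < n" and Ln: "L < m" and KL: "K < L" using L m K by linarith+
  have Kn: "K < n" using KL Ln mn by linarith
  consider (c1) "(us ! 0, us ! L) \<in> A" "(us ! K, us ! m) \<in> A"
    | (c2) "(us ! 0, us ! L) \<in> A" "(us ! m, us ! K) \<in> A"
    | (c3) "(us ! L, us ! 0) \<in> A" "(us ! K, us ! m) \<in> A"
    | (c4) "(us ! L, us ! 0) \<in> A" "(us ! m, us ! K) \<in> A"
    using aL am unfolding adj_def by blast
  then show False
  proof cases
    case c1
    have "contains_bispindle_subdivision (set us) A k1 k2 k3"
    proof (rule FBgen[where n=n and b=0 and s=K and p=L and q=m])
      show "(us ! 0, us ! ((0 + L) mod n)) \<in> A" using c1 Ln mn by simp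
      show "(us ! ((0 + K) mod n), us ! ((0 + m) mod n)) \<in> A" using c1 Kn mn by simp
    qed (use hc n K kk L m mn Ln KL in auto)
    then show False using noB by blast
  next
    case c2
    have e1: "(m + (n - m + K)) mod n = K" using mn Kn by simp
    have e2: "(m + (n - m)) mod n = 0" using mn by simp
    have e3: "(m + (n - m + L)) mod n = L" using mn Ln by simp
    have "contains_bispindle_subdivision (set us) A k1 k2 k3"
    proof (rule FBgen[where n=n and b=m and s="n - m" and p="n - m + K" and q="n - m + L"])
      show "(us ! m, us ! ((m + (n - m + K)) mod n)) \<in> A" using c2 e1 by simp
      show "(us ! ((m + (n - m)) mod n), us ! ((m + (n - m + L)) mod n)) \<in> A" using c2 e2 e3 by simp
    qed (use hc n K kk L m mn Ln KL in auto)
    then show False using noB by blast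
  next
    case c3
    have e1: "(K + (m - K)) mod n = m" using mn Kn Ln KL by simp
    have e2: "(K + (L - K)) mod n = L" using Ln mn KL by simp
    have e3: "(K + (n - K)) mod n = 0" using Kn by simp
    have "contains_bispindle_subdivision (set us) A k1 k2 k3"
    proof (rule FBgen[where n=n and b=K and s="L - K" and p="m - K" and q="n - K"])
      show "(us ! K, us ! ((K + (m - K)) mod n)) \<in> A" using c3 e1 by simp
      show "(us ! ((K + (L - K)) mod n), us ! ((K + (n - K)) mod n)) \<in> A" using c3 e2 e3 by simp
    qed (use hc n K kk L m mn Ln KL in auto)
    then show False using noB by blast
  next
    case c4
    have e1: "(L + (n - L)) mod n = 0" using Ln mn by simp
    have e2: "(L + (m - L)) mod n = m" using Ln mn by simp
    have e3: "(L + (n - L + K)) mod n = K" using Ln mn Kn by simp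
    have "contains_bispindle_subdivision (set us) A k1 k2 k3"
    proof (rule FBgen[where n=n and b=L and s="m - L" and p="n - L" and q="n - L + K"])
      show "(us ! L, us ! ((L + (n - L)) mod n)) \<in> A" using c4 e1 by simp
      show "(us ! ((L + (m - L)) mod n), us ! ((L + (n - L + K)) mod n)) \<in> A" using c4 e2 e3 by simp
    qed (use hc n K kk L m mn Ln KL in auto)
    then show False using noB by blast
  qed
qed


lemma window:
  assumes hc: "HC A us" and n: "n = length us" and nK: "4 * K < n" and K: "1 \<le> K"
    and Asub: "A \<subseteq> set us \<times> set us" and loop: "\<forall>v. (v, v) \<notin> A"
    and far: "\<And>m. 3 * K \<le> m \<Longrightarrow> m \<le> n - K \<Longrightarrow> \<not> adj A (us ! K) (us ! m)"
  shows "card (nbh A (us ! K)) \<le> 4 * K - 2"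
proof -
  define W where "W = (\<lambda>j. us ! (K + j)) ` {1..<2*K} \<union> (\<lambda>j. us ! ((K + n - j) mod n)) ` {1..<2*K}"
  have fW: "finite W" unfolding W_def by simp
  have cW: "card W \<le> 4 * K - 2"
  proof -
    have "card W \<le> card ((\<lambda>j. us ! (K + j)) ` {1..<2*K}) + card ((\<lambda>j. us ! ((K + n - j) mod n)) ` {1..<2*K})"
      unfolding W_def by (rule card_Un_le)
    also have "\<dots> \<le> card {1..<2*K} + card {1..<2*K}"
      by (intro add_mono card_image_le) simp_all
    finally show ?thesis using K by simp
  qed
  have sub: "nbh A (us ! K) \<subseteq> W"
  proof
    fix w assume "w \<in> nbh A (us ! K)"
    then have aw: "adj A (us ! K) w" unfolding nbh_def by simp
    then have "w \<in> set us" using Asub unfolding adj_def by auto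
    then obtain m where m: "m < n" "w = us ! m" using n by (auto simp: in_set_conv_nth)
    have "m \<noteq> K" using aw loop m unfolding adj_def by auto
    consider (a) "m < K" | (b) "K < m" "m < 3 * K" | (c) "3 * K \<le> m" "m \<le> n - K" | (d) "n - K < m"
      using \<open>m \<noteq> K\<close> by linarith
    then show "w \<in> W"
    proof cases
      case a
      have "(K + n - (K - m)) mod n = m" using a m nK by simp
      moreover have "K - m \<in> {1..<2*K}" using a K by auto
      ultimately show ?thesis unfolding W_def using m by (metis (no_types, lifting) UnI2 image_eqI)
    next
      case b
      have "K + (m - K) = m" using b by simp
      moreover have "m - K \<in> {1..<2*K}" using b by auto
      ultimately show ?thesis unfolding W_def using m by (metis (no_types, lifting) UnI1 image_eqI)
    next
      case c
      then show ?thesis using far[of m] aw m by simp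
    next
      case d
      have "(K + n - (n + K - m)) mod n = m" using d m nK by simp
      moreover have "n + K - m \<in> {1..<2*K}" using d m K by auto
      ultimately show ?thesis unfolding W_def using m by (metis (no_types, lifting) UnI2 image_eqI)
    qed
  qed
  show ?thesis using card_mono[OF fW sub] cW by linarith
qed


lemma adj_sym: "adj A u v = adj A v u"
  unfolding adj_def by blast

lemma lowdeg:
  assumes hc: "HC A vs" and n: "n = length vs" and nK: "4 * K < n" and K: "1 \<le> K"
    and kk: "k1 \<le> K" "k2 \<le> K" "k3 \<le> K"
    and Asub: "A \<subseteq> set vs \<times> set vs" and loop: "\<forall>v. (v, v) \<notin> A"
    and noB: "\<not> contains_bispindle_subdivision (set vs) A k1 k2 k3"
  shows "\<exists>y \<in> set vs. card (nbh A y) \<le> 4 * K - 2"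
proof -
  define P where "P L \<longleftrightarrow> 2 * K \<le> L \<and> L \<le> n - 2 * K \<and>
      (\<exists>i < n. adj A (vs ! i) (vs ! ((i + L) mod n)))" for L
  show ?thesis
  proof (cases "\<exists>L. P L")
    case False
    have "card (nbh A (vs ! K)) \<le> 4 * K - 2"
    proof (rule window[OF hc n nK K Asub loop])
      fix m assume m: "3 * K \<le> m" "m \<le> n - K"
      show "\<not> adj A (vs ! K) (vs ! m)"
      proof
        assume a: "adj A (vs ! K) (vs ! m)"
        have "m < n" using m nK K by linarith
        then have "(K + (m - K)) mod n = m" using m by simp
        then have "P (m - K)" unfolding P_def using m nK a
          by (intro conjI exI[of _ K]) auto
        then show False using False by blast
      qed
    qed
    moreover have "K < length vs" using nK n K by linarith
    then have "vs ! K \<in> set vs" using nth_mem by blast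
    ultimately show ?thesis by blast
  next
    case True
    define L where "L = (LEAST L. P L)"
    have PL: "P L" unfolding L_def using True by (metis LeastI)
    have Lmin: "\<And>L'. P L' \<Longrightarrow> L \<le> L'" unfolding L_def by (rule Least_le)
    obtain i where i: "i < n" "adj A (vs ! i) (vs ! ((i + L) mod n))" using PL unfolding P_def by blast
    define us where "us = rotate i vs"
    have hcu: "HC A us" unfolding us_def by (rule HC_rotate[OF hc])
    have nu: "n = length us" unfolding us_def using n by simp
    have su: "set us = set vs" unfolding us_def by simp
    have e: "\<And>j. j < n \<Longrightarrow> us ! j = vs ! ((i + j) mod n)" unfolding us_def using nth_rotate n by blast
    have L1: "2 * K \<le> L" "L \<le> n - 2 * K" using PL unfolding P_def by auto
    have card: "card (nbh A (us ! K)) \<le> 4 * K - 2"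
    proof (rule window[OF hcu nu nK K])
      show "A \<subseteq> set us \<times> set us" using Asub su by simp
      show "\<forall>v. (v, v) \<notin> A" by (rule loop)
      fix m assume m: "3 * K \<le> m" "m \<le> n - K"
      show "\<not> adj A (us ! K) (us ! m)"
      proof
        assume a: "adj A (us ! K) (us ! m)"
        have mn: "m < n" "K < n" using m nK K by linarith+
        have uK: "us ! K = vs ! ((i + K) mod n)" using e mn by simp
        have um: "us ! m = vs ! ((i + m) mod n)" using e mn by simp
        have r1: "((i + K) mod n + (m - K)) mod n = (i + m) mod n"
        proof -
          have "((i + K) mod n + (m - K)) mod n = (i + K + (m - K)) mod n"
            by (simp add: mod_add_left_eq)
          also have "i + K + (m - K) = i + m" using m by simp
          finally show ?thesis .
        qed
        have "P (m - K)" unfolding P_def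
        proof (intro conjI exI[of _ "(i + K) mod n"])
          show "(i + K) mod n < n" using mn by simp
          show "adj A (vs ! ((i + K) mod n)) (vs ! (((i + K) mod n + (m - K)) mod n))"
            using a uK um r1 by simp
        qed (use m nK in auto)
        then have le1: "L \<le> m - K" by (rule Lmin)
        have r2: "((i + m) mod n + (n - m + K)) mod n = (i + K) mod n"
        proof -
          have "((i + m) mod n + (n - m + K)) mod n = (i + m + (n - m + K)) mod n"
            by (simp add: mod_add_left_eq)
          also have "i + m + (n - m + K) = (i + K) + n" using mn by simp
          finally show ?thesis by simp
        qed
        have "P (n - m + K)" unfolding P_def
        proof (intro conjI exI[of _ "(i + m) mod n"])
          show "(i + m) mod n < n" using mn by simp
          show "adj A (vs ! ((i + m) mod n)) (vs ! (((i + m) mod n + (n - m + K)) mod n))"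
            using a uK um r2 adj_sym by metis
        qed (use m nK in auto)
        then have le2: "L \<le> n - m + K" by (rule Lmin)
        have a0: "adj A (us ! 0) (us ! L)"
        proof -
          have "us ! 0 = vs ! i" using e[of 0] i by simp
          moreover have "L < n" using L1 nK K by linarith
          then have "us ! L = vs ! ((i + L) mod n)" using e[of L] by simp
          ultimately show ?thesis using i by simp
        qed
        show False
          by (rule coreF[OF hcu nu K kk _ L1 a0 _ _ a]) (use noB su le1 le2 m in auto)
      qed
    qed
    moreover have "K < length us" using nK nu K by linarith
    then have "us ! K \<in> set vs" using su nth_mem by blast
    ultimately show ?thesis by blast
  qed
qed

fun ins :: "'a \<Rightarrow> 'a \<Rightarrow> 'a \<Rightarrow> 'a list \<Rightarrow> 'a list" where
  "ins p s y (u # v # r) = (if u = p \<and> v = s then u # y # ins p s y (v # r) else u # ins p s y (v # r))"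
| "ins p s y r = r"

lemma ins_Cons: "\<exists>t. ins p s y (u # r) = u # t"
  by (cases r) auto

lemma hd_ins: "xs \<noteq> [] \<Longrightarrow> hd (ins p s y xs) = hd xs"
  by (induction p s y xs rule: ins.induct) auto

lemma ins_ne: "ins p s y xs = [] \<longleftrightarrow> xs = []"
  by (induction p s y xs rule: ins.induct) auto

lemma last_ins: "xs \<noteq> [] \<Longrightarrow> last (ins p s y xs) = last xs"
  by (induction p s y xs rule: ins.induct) (auto simp: ins_ne)

lemma set_ins: "set (ins p s y xs) \<subseteq> set xs \<union> {y}"
  by (induction p s y xs rule: ins.induct) auto

lemma filter_ins: "y \<notin> set xs \<Longrightarrow> filter (\<lambda>v. v \<noteq> y) (ins p s y xs) = xs"
  by (induction p s y xs rule: ins.induct) auto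

lemma len_ins: "length xs \<le> length (ins p s y xs)"
  by (induction p s y xs rule: ins.induct) auto

lemma ins_id: "p \<notin> set xs \<Longrightarrow> ins p s y xs = xs"
  by (induction p s y xs rule: ins.induct) auto

lemma succ_ins:
  assumes "successively (\<lambda>u v. (u, v) \<in> A') xs"
    and "\<forall>(u, v) \<in> A'. (u, v) \<in> A \<or> (u = p \<and> v = s)"
    and "(p, y) \<in> A" "(y, s) \<in> A"
  shows "successively (\<lambda>u v. (u, v) \<in> A) (ins p s y xs)"
  using assms
proof (induction p s y xs rule: ins.induct)
  case (1 p s y u v r)
  have hv: "hd (ins p s y (v # r)) = v" by (simp add: hd_ins)
  have ne: "ins p s y (v # r) \<noteq> []" by (simp add: ins_ne)
  have IH: "successively (\<lambda>u v. (u, v) \<in> A) (ins p s y (v # r))"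
  proof (cases "u = p \<and> v = s")
    case True
    then show ?thesis using 1(1) 1(3-) by (simp add: successively_Cons)
  next
    case False
    then show ?thesis using 1(2) 1(3-) by (simp add: successively_Cons)
  qed
  show ?case
  proof (cases "u = p \<and> v = s")
    case True
    then show ?thesis using IH hv ne "1.prems"(3,4) by (simp add: successively_Cons)
  next
    case False
    have "(u, v) \<in> A'" using "1.prems"(1) by simp
    then have "(u, v) \<in> A" using "1.prems"(2) False by blast
    moreover have "ins p s y (u # v # r) = u # ins p s y (v # r)" using False by simp
    ultimately show ?thesis using IH hv ne by (simp add: successively_Cons)
  qed
qed auto

lemma dist_ins: "distinct xs \<Longrightarrow> y \<notin> set xs \<Longrightarrow> distinct (ins p s y xs)"
proof (induction p s y xs rule: ins.induct)
  case (1 p s y u v r)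
  show ?case
  proof (cases "u = p \<and> v = s")
    case True
    then have "ins p s y (v # r) = v # r" using 1 by (intro ins_id) auto
    then show ?thesis using True 1 by auto
  next
    case False
    have "distinct (ins p s y (v # r))" using 1(2) 1(3-) False by simp
    moreover have "u \<notin> set (ins p s y (v # r))" using set_ins[of p s y "v # r"] 1 by auto
    moreover have "ins p s y (u # v # r) = u # ins p s y (v # r)" using False by simp
    ultimately show ?thesis by simp
  qed
qed auto

lemma y_ins: "y \<in> set (ins p s y xs) \<Longrightarrow> y \<notin> set xs \<Longrightarrow> \<exists>l r. xs = l @ p # s # r"
proof (induction p s y xs rule: ins.induct)
  case (1 p s y u v r)
  show ?case
  proof (cases "u = p \<and> v = s")
    case True
    then show ?thesis by (intro exI[of _ "[]"] exI[of _ r]) auto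
  next
    case False
    then obtain l r' where "v # r = l @ p # s # r'" using 1 by auto
    then show ?thesis by (intro exI[of _ "u # l"] exI[of _ r']) auto
  qed
qed auto


lemma dpath_len2:
  assumes "dpath A P x z" "x \<noteq> z"
  shows "length P \<ge> 2"
proof (rule ccontr)
  assume "\<not> length P \<ge> 2"
  moreover have "P \<noteq> []" using assms unfolding dpath_def by simp
  moreover have "0 < length P" using \<open>P \<noteq> []\<close> by simp
  ultimately have "length P = 1" by linarith
  then obtain a where "P = [a]" by (metis One_nat_def length_0_conv length_Suc_conv)
  then show False using assms unfolding dpath_def by auto
qed

lemma dpath_inner:
  assumes "dpath A P x z" "x \<noteq> z"
  shows "inner P = set P - {x, z}"
  using inner_eq[of P] dpath_len2[OF assms] assms unfolding dpath_def by simp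

lemma dpath_avoid:
  assumes "dpath A' P x z" "x \<noteq> z" "\<forall>(u, v) \<in> A'. u \<noteq> y \<and> v \<noteq> y"
  shows "y \<notin> set P"
proof
  assume "y \<in> set P"
  then obtain i where i: "i < length P" "P ! i = y" by (auto simp: in_set_conv_nth)
  have l2: "length P \<ge> 2" by (rule dpath_len2[OF assms(1,2)])
  have arcs: "\<And>j. Suc j < length P \<Longrightarrow> (P ! j, P ! Suc j) \<in> A'"
    using assms(1) unfolding dpath_def by blast
  show False
  proof (cases "Suc i < length P")
    case True
    then show ?thesis using arcs[of i] i assms(3) by auto
  next
    case False
    then have "Suc (i - 1) < length P" "Suc (i - 1) = i" using i l2 by auto
    then show ?thesis using arcs[of "i - 1"] i assms(3) by auto
  qed
qed

lemma dpath_ins: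
  assumes "dpath A' P x z" "y \<notin> set P"
    and "\<forall>(u, v) \<in> A'. (u, v) \<in> A \<or> (u = p \<and> v = s)"
    and "(p, y) \<in> A" "(y, s) \<in> A"
  shows "dpath A (ins p s y P) x z"
  using assms unfolding dpath_iff
  by (auto simp: ins_ne hd_ins last_ins intro: dist_ins succ_ins)

lemma use_facts:
  assumes "dpath A P x z" "x \<noteq> z" "P = l @ p # s # r"
  shows "p \<in> inner P \<union> {x}" "p \<noteq> z" "s \<in> inner P \<union> {z}" "s \<noteq> x"
    and "p = x \<Longrightarrow> s = z \<Longrightarrow> P = [x, z]"
proof -
  have d: "distinct P" and hx: "hd P = x" and lz: "last P = z" using assms(1) unfolding dpath_def by auto
  have inn: "inner P = set P - {x, z}" by (rule dpath_inner[OF assms(1,2)])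
  have pz: "p \<noteq> last P" using d unfolding assms(3) by (auto simp: last_append)
  then show "p \<noteq> z" using lz by simp
  have sx: "s \<noteq> hd P" using d unfolding assms(3) by (cases l) auto
  then show "s \<noteq> x" using hx by simp
  show "p \<in> inner P \<union> {x}" using pz lz inn assms(3) by auto
  show "s \<in> inner P \<union> {z}" using sx hx inn assms(3) by auto
  assume px: "p = x" and sz: "s = z"
  have "l = []"
  proof (rule ccontr)
    assume "l \<noteq> []"
    then have "hd P \<in> set l" unfolding assms(3) by simp
    then show False using d px hx unfolding assms(3) by auto
  qed
  moreover have "r = []"
  proof (rule ccontr)
    assume "r \<noteq> []"
    then have "last P \<in> set r" unfolding assms(3) by simp
    then show False using d sz lz unfolding assms(3) by auto
  qed
  ultimately show "P = [x, z]" using assms(3) px sz by simp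
qed

lemma inner_sub: "inner Q \<subseteq> set Q"
  unfolding inner_def by (cases Q) (auto dest: in_set_butlastD)

lemma transfer:
  assumes py: "(p, y) \<in> A" and ys: "(y, s) \<in> A"
    and A': "\<forall>(u, v) \<in> A'. u \<noteq> y \<and> v \<noteq> y \<and> ((u, v) \<in> A \<or> (u = p \<and> v = s))"
    and VV: "V' \<subseteq> V"
    and B: "contains_bispindle_subdivision V' A' k1 k2 k3"
  shows "contains_bispindle_subdivision V A k1 k2 k3"
proof -
  obtain x z P1 P2 P3 where x: "x \<in> V'" "z \<in> V'" "x \<noteq> z"
    and d1: "dpath A' P1 x z" and d2: "dpath A' P2 x z" and d3: "dpath A' P3 z x"
    and ne: "P1 \<noteq> P2" and l: "plen P1 \<ge> k1" "plen P2 \<ge> k2" "plen P3 \<ge> k3"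
    and i12: "inner P1 \<inter> inner P2 = {}" and i13: "inner P1 \<inter> inner P3 = {}"
    and i23: "inner P2 \<inter> inner P3 = {}"
    using B unfolding contains_bispindle_subdivision_def by blast
  have av: "\<forall>(u, v) \<in> A'. u \<noteq> y \<and> v \<noteq> y" using A' by auto
  have ar: "\<forall>(u, v) \<in> A'. (u, v) \<in> A \<or> (u = p \<and> v = s)" using A' by auto
  have y1: "y \<notin> set P1" by (rule dpath_avoid[OF d1 x(3) av])
  have y2: "y \<notin> set P2" by (rule dpath_avoid[OF d2 x(3) av])
  have y3: "y \<notin> set P3" by (rule dpath_avoid[OF d3 _ av]) (use x in auto)
  define Q1 where "Q1 = ins p s y P1"
  define Q2 where "Q2 = ins p s y P2"
  define Q3 where "Q3 = ins p s y P3"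
  have e1: "dpath A Q1 x z" unfolding Q1_def by (rule dpath_ins[OF d1 y1 ar py ys])
  have e2: "dpath A Q2 x z" unfolding Q2_def by (rule dpath_ins[OF d2 y2 ar py ys])
  have e3: "dpath A Q3 z x" unfolding Q3_def by (rule dpath_ins[OF d3 y3 ar py ys])
  have zx: "z \<noteq> x" using x by auto
  have neQ: "Q1 \<noteq> Q2"
  proof
    assume "Q1 = Q2"
    then have "filter (\<lambda>v. v \<noteq> y) Q1 = filter (\<lambda>v. v \<noteq> y) Q2" by simp
    then show False using ne filter_ins[OF y1] filter_ins[OF y2] unfolding Q1_def Q2_def by simp
  qed
  have lq: "plen Q1 \<ge> k1" "plen Q2 \<ge> k2" "plen Q3 \<ge> k3"
    using l len_ins[of P1 p s y] len_ins[of P2 p s y] len_ins[of P3 p s y]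
    unfolding plen_def Q1_def Q2_def Q3_def by linarith+
  have iq1: "inner Q1 \<subseteq> inner P1 \<union> {y}"
    using dpath_inner[OF e1 x(3)] dpath_inner[OF d1 x(3)] set_ins[of p s y P1] unfolding Q1_def by auto
  have iq2: "inner Q2 \<subseteq> inner P2 \<union> {y}"
    using dpath_inner[OF e2 x(3)] dpath_inner[OF d2 x(3)] set_ins[of p s y P2] unfolding Q2_def by auto
  have iq3: "inner Q3 \<subseteq> inner P3 \<union> {y}"
    using dpath_inner[OF e3 zx] dpath_inner[OF d3 zx] set_ins[of p s y P3] unfolding Q3_def by auto
  have u1: "\<exists>l r. P1 = l @ p # s # r" if "y \<in> inner Q1"
    using y_ins[OF _ y1] that inner_sub[of Q1] unfolding Q1_def by blast
  have u2: "\<exists>l r. P2 = l @ p # s # r" if "y \<in> inner Q2"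
    using y_ins[OF _ y2] that inner_sub[of Q2] unfolding Q2_def by blast
  have u3: "\<exists>l r. P3 = l @ p # s # r" if "y \<in> inner Q3"
    using y_ins[OF _ y3] that inner_sub[of Q3] unfolding Q3_def by blast
  have j12: "inner Q1 \<inter> inner Q2 = {}"
  proof -
    have "y \<notin> inner Q1 \<inter> inner Q2"
    proof
      assume "y \<in> inner Q1 \<inter> inner Q2"
      then obtain la ra lb rb where a: "P1 = la @ p # s # ra" and b: "P2 = lb @ p # s # rb"
        using u1 u2 by blast
      note fa = use_facts[OF d1 x(3) a] and fb = use_facts[OF d2 x(3) b]
      have "p = x" using fa(1) fb(1) i12 by blast
      moreover have "s = z" using fa(3) fb(3) i12 by blast
      ultimately show False using fa(5) fb(5) ne by simp
    qed
    then show ?thesis using iq1 iq2 i12 by blast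
  qed
  have j13: "inner Q1 \<inter> inner Q3 = {}"
  proof -
    have "y \<notin> inner Q1 \<inter> inner Q3"
    proof
      assume "y \<in> inner Q1 \<inter> inner Q3"
      then obtain la ra lb rb where a: "P1 = la @ p # s # ra" and b: "P3 = lb @ p # s # rb"
        using u1 u3 by blast
      note fa = use_facts[OF d1 x(3) a] and fb = use_facts[OF d3 zx b]
      show False using fa(1,2) fb(1,2) i13 by blast
    qed
    then show ?thesis using iq1 iq3 i13 by blast
  qed
  have j23: "inner Q2 \<inter> inner Q3 = {}"
  proof -
    have "y \<notin> inner Q2 \<inter> inner Q3"
    proof
      assume "y \<in> inner Q2 \<inter> inner Q3"
      then obtain la ra lb rb where a: "P2 = la @ p # s # ra" and b: "P3 = lb @ p # s # rb"
        using u2 u3 by blast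
      note fa = use_facts[OF d2 x(3) a] and fb = use_facts[OF d3 zx b]
      show False using fa(1,2) fb(1,2) i23 by blast
    qed
    then show ?thesis using iq2 iq3 i23 by blast
  qed
  have xV: "x \<in> V" "z \<in> V" using x VV by auto
  show ?thesis unfolding contains_bispindle_subdivision_def
    apply (rule exI[of _ x], rule exI[of _ z])
    apply (rule exI[of _ Q1], rule exI[of _ Q2], rule exI[of _ Q3])
    using xV x(3) e1 e2 e3 neQ lq j12 j13 j23 by simp
qed


lemma shortcut:
  assumes hc: "HC A us" and n: "n = length us" and n3: "3 \<le> n"
    and Asub: "A \<subseteq> set us \<times> set us"
  defines "y \<equiv> us ! (n - 1)" and "A' \<equiv> {(u, v). (u, v) \<in> A \<and> u \<noteq> us ! (n - 1) \<and> v \<noteq> us ! (n - 1)} \<union> {(us ! (n - 2), us ! 0)}"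
  shows "HC A' (butlast us)" "set (butlast us) = set us - {y}"
    "A' \<subseteq> set (butlast us) \<times> set (butlast us)"
    "(us ! (n - 2), us ! 0) \<noteq> (us ! 0, us ! 0)"
    "(us ! (n - 2), y) \<in> A" "(y, us ! 0) \<in> A"
    "\<forall>(u, v) \<in> A'. u \<noteq> y \<and> v \<noteq> y \<and> ((u, v) \<in> A \<or> (u = us ! (n - 2) \<and> v = us ! 0))"
proof -
  have d: "distinct us" using hc unfolding HC_def by simp
  have inj: "\<And>i j. i < n \<Longrightarrow> j < n \<Longrightarrow> us ! i = us ! j \<longleftrightarrow> i = j"
    using d n nth_eq_iff_index_eq by blast
  have une: "us \<noteq> []" using hc unfolding HC_def by simp
  have ly: "last us = y" unfolding y_def n using une last_conv_nth[of us] by simp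
  show sb: "set (butlast us) = set us - {y}"
  proof -
    obtain m where "us = m @ [y]" using ly n3 n by (metis append_butlast_last_id list.size(3) not_numeral_le_zero)
    then show ?thesis using d by auto
  qed
  have lb: "length (butlast us) = n - 1" using n by simp
  have nb: "\<And>i. i < n - 1 \<Longrightarrow> butlast us ! i = us ! i" using n by (simp add: nth_butlast)
  have y_ne: "\<And>i. i < n - 1 \<Longrightarrow> us ! i \<noteq> y" unfolding y_def using inj n3 by simp
  have p_ne: "us ! (n - 2) \<noteq> us ! 0" using inj n3 by simp
  show "(us ! (n - 2), us ! 0) \<noteq> (us ! 0, us ! 0)" using p_ne by simp
  show py: "(us ! (n - 2), y) \<in> A"
    using HC_arc[OF hc, of "n - 2"] n3 n unfolding y_def by (simp add: Suc_diff_Suc numeral_2_eq_2)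
  show yp: "(y, us ! 0) \<in> A" using HC_last_arc[OF hc] n unfolding y_def by simp
  show "\<forall>(u, v) \<in> A'. u \<noteq> y \<and> v \<noteq> y \<and> ((u, v) \<in> A \<or> (u = us ! (n - 2) \<and> v = us ! 0))"
    unfolding A'_def y_def[symmetric] using y_ne[of "n - 2"] y_ne[of 0] n3 by auto
  show "A' \<subseteq> set (butlast us) \<times> set (butlast us)"
  proof -
    have "us ! (n - 2) \<in> set us" "us ! 0 \<in> set us" by (rule nth_mem, use n3 n in linarith)+
    then show ?thesis unfolding A'_def sb y_def[symmetric] using Asub y_ne[of "n - 2"] y_ne[of 0] n3 by auto
  qed
  show "HC A' (butlast us)"
    unfolding HC_def
  proof (intro conjI allI impI)
    have "length (butlast us) > 0" using lb n3 by linarith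
    then show "butlast us \<noteq> []" by (metis length_greater_0_conv)
    show "distinct (butlast us)" using d by (rule distinct_butlast)
    fix i assume i: "i < length (butlast us)"
    show "(butlast us ! i, butlast us ! ((i + 1) mod length (butlast us))) \<in> A'"
    proof (cases "i + 1 < n - 1")
      case True
      then have "(i + 1) mod length (butlast us) = i + 1" using lb by simp
      moreover have "(us ! i, us ! Suc i) \<in> A" using HC_arc[OF hc, of i] True n by simp
      moreover have "us ! i \<noteq> y" "us ! Suc i \<noteq> y" using y_ne True by simp_all
      ultimately show ?thesis using nb[of i] nb[of "i + 1"] True unfolding A'_def y_def[symmetric] by simp
    next
      case False
      then have "i = n - 2" using i lb by simp
      moreover have "i + 1 = length (butlast us)" using False i lb by linarith
      then have "(i + 1) mod length (butlast us) = 0" by simp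
      ultimately show ?thesis using nb[of "n - 2"] nb[of 0] n3 unfolding A'_def by simp
    qed
  qed
qed


lemma small_col:
  assumes n: "length vs \<le> N" and loop: "\<forall>v. (v, v) \<notin> A"
    and Asub: "A \<subseteq> set vs \<times> set vs"
  shows "\<exists>c. proper_colouring (set vs) A c N"
proof -
  define c where "c v = (LEAST i. vs ! i = v)" for v
  have cv: "vs ! c v = v \<and> c v < length vs" if vin: "v \<in> set vs" for v
  proof -
    obtain i where i: "i < length vs" "vs ! i = v" using vin by (auto simp: in_set_conv_nth)
    have "vs ! c v = v" unfolding c_def by (rule LeastI[where k=i]) (rule i(2))
    moreover have "c v \<le> i" unfolding c_def by (rule Least_le) (rule i(2))
    ultimately show ?thesis using i by simp
  qed
  have "proper_colouring (set vs) A c N"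
    unfolding proper_colouring_def
  proof (intro conjI ballI)
    fix v assume "v \<in> set vs" then have "c v < length vs" using cv by blast
    then show "c v < N" using n by linarith
  next
    fix e assume e: "e \<in> A"
    obtain u v where uv: "e = (u, v)" by (cases e)
    have a: "(u, v) \<in> A" using e uv by simp
    then have "u \<noteq> v" "u \<in> set vs" "v \<in> set vs" using loop Asub by auto
    then have "c u \<noteq> c v" using cv[of u] cv[of v] by auto
    then show "case e of (u, v) \<Rightarrow> c u \<noteq> c v" using uv by simp
  qed
  then show ?thesis by blast
qed

lemma free_colour:
  assumes "finite B" "card B < N"
  shows "\<exists>col < N. col \<notin> B"
proof (rule ccontr)
  assume "\<not> (\<exists>col < N. col \<notin> B)"
  then have "{..<N} \<subseteq> B" by auto
  then have "card {..<N} \<le> card B" by (rule card_mono[OF assms(1)])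
  then have "N \<le> card B" by simp
  then show False using assms(2) by simp
qed

lemma main_col:
  assumes K: "1 \<le> K" and kk: "k1 \<le> K" "k2 \<le> K" "k3 \<le> K"
  shows "length vs = n \<Longrightarrow> HC A vs \<Longrightarrow> A \<subseteq> set vs \<times> set vs \<Longrightarrow> (\<forall>v. (v, v) \<notin> A) \<Longrightarrow>
    \<not> contains_bispindle_subdivision (set vs) A k1 k2 k3 \<Longrightarrow>
    \<exists>c. proper_colouring (set vs) A c (4 * K)"
proof (induction n arbitrary: vs A rule: less_induct)
  case (less n)
  note hc = less.prems(2) and Asub = less.prems(3) and loop = less.prems(4) and noB = less.prems(5)
  show ?case
  proof (cases "n \<le> 4 * K")
    case True
    then show ?thesis using small_col[OF _ loop Asub] less.prems(1) by simp
  next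
    case False
    then have nK: "4 * K < n" by simp
    obtain y where y: "y \<in> set vs" and cy: "card (nbh A y) \<le> 4 * K - 2"
      using lowdeg[OF hc less.prems(1)[symmetric] nK K kk Asub loop noB] by blast
    obtain t where t: "t < n" "vs ! t = y" using y less.prems(1) by (auto simp: in_set_conv_nth)
    define us where "us = rotate (Suc t) vs"
    have hcu: "HC A us" unfolding us_def by (rule HC_rotate[OF hc])
    have nu: "n = length us" unfolding us_def using less.prems(1) by simp
    have su: "set us = set vs" unfolding us_def by simp
    have n3: "3 \<le> n" using nK K by linarith
    have yl: "us ! (n - 1) = y"
    proof -
      have "us ! (n - 1) = vs ! ((Suc t + (n - 1)) mod n)"
        unfolding us_def using nth_rotate[of "n - 1" vs "Suc t"] less.prems(1) n3 by simp
      also have "(Suc t + (n - 1)) mod n = t" using t n3 by (simp add: add.commute)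
      finally show ?thesis using t by simp
    qed
    define A' where "A' = {(u, v). (u, v) \<in> A \<and> u \<noteq> us ! (n - 1) \<and> v \<noteq> us ! (n - 1)} \<union> {(us ! (n - 2), us ! 0)}"
    have Asu: "A \<subseteq> set us \<times> set us" using Asub su by simp
    note sc = shortcut[OF hcu nu n3 Asu, folded A'_def, unfolded yl]
    have noB': "\<not> contains_bispindle_subdivision (set (butlast us)) A' k1 k2 k3"
    proof
      assume H: "contains_bispindle_subdivision (set (butlast us)) A' k1 k2 k3"
      have ss: "set (butlast us) \<subseteq> set us" using sc(2) by auto
      have "contains_bispindle_subdivision (set us) A k1 k2 k3"
        by (rule transfer[OF sc(5) sc(6) sc(7) ss H])
      then show False using noB su by simp
    qed
    have loop': "\<forall>v. (v, v) \<notin> A'"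
      using loop sc(4) unfolding A'_def by auto
    have "length (butlast us) < n" using nu n3 by simp
    then obtain c' where c': "proper_colouring (set (butlast us)) A' c' (4 * K)"
      using less.IH[OF _ refl sc(1) sc(3) loop' noB'] by blast
    have fin: "finite (nbh A y)"
    proof -
      have "nbh A y \<subseteq> set vs" using Asub unfolding nbh_def adj_def by auto
      then show ?thesis by (rule finite_subset) simp
    qed
    have "card (c' ` nbh A y) < 4 * K"
      using card_image_le[OF fin, of c'] cy K by linarith
    then obtain col where col: "col < 4 * K" "col \<notin> c' ` nbh A y"
      using free_colour[of "c' ` nbh A y" "4 * K"] fin by blast
    define c where "c = c'(y := col)"
    have "proper_colouring (set vs) A c (4 * K)"
      unfolding proper_colouring_def
    proof (intro conjI ballI)
      fix v assume v: "v \<in> set vs"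
      show "c v < 4 * K"
      proof (cases "v = y")
        case True then show ?thesis using col unfolding c_def by simp
      next
        case False
        then have "v \<in> set (butlast us)" using v sc(2) su by simp
        then show ?thesis using c' False unfolding c_def proper_colouring_def by simp
      qed
    next
      fix e assume e: "e \<in> A"
      obtain u v where uv: "e = (u, v)" by (cases e)
      have a: "(u, v) \<in> A" using e uv by simp
      have "c u \<noteq> c v"
      proof (cases "u = y \<or> v = y")
        case True
        have "u \<noteq> v" using a loop by auto
        show ?thesis
        proof (cases "u = y")
          case True
          then have "v \<in> nbh A y" "v \<noteq> y" using a \<open>u \<noteq> v\<close> unfolding nbh_def adj_def by auto
          then show ?thesis using True col unfolding c_def by auto
        next
          case False
          then have "v = y" using \<open>u = y \<or> v = y\<close> by simp
          then have "u \<in> nbh A y" "u \<noteq> y" using a \<open>u \<noteq> v\<close> unfolding nbh_def adj_def by auto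
          then show ?thesis using \<open>v = y\<close> col unfolding c_def by auto
        qed
      next
        case False
        then have "(u, v) \<in> A'" using a yl unfolding A'_def by auto
        then have "c' u \<noteq> c' v" using c' unfolding proper_colouring_def by auto
        then show ?thesis using False unfolding c_def by simp
      qed
      then show "case e of (u, v) \<Rightarrow> c u \<noteq> c v" using uv by simp
    qed
    then show ?thesis by blast
  qed
qed

theorem theorem8:
  fixes V :: "'a set" and A :: "('a \<times> 'a) set" and k1 k2 k3 :: nat
  assumes "digraph V A"
    and "k1 \<ge> 1" and "k2 \<ge> 1" and "k3 \<ge> 1"
    and "hamiltonian V A"
    and "\<not> contains_bispindle_subdivision V A k1 k2 k3"
  shows "chromatic_number V A \<le> 4 * max k1 (max k2 k3)"
proof -
  define K where "K = max k1 (max k2 k3)"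
  have K: "1 \<le> K" "k1 \<le> K" "k2 \<le> K" "k3 \<le> K" unfolding K_def using assms(2) by auto
  obtain vs where vs: "vs \<noteq> []" "distinct vs" "set vs = V"
    "\<forall>i < length vs. (vs ! i, vs ! ((i + 1) mod length vs)) \<in> A"
    using assms(5) unfolding hamiltonian_def by blast
  have hc: "HC A vs" unfolding HC_def using vs by blast
  have Asub: "A \<subseteq> set vs \<times> set vs" and loop: "\<forall>v. (v, v) \<notin> A"
    using assms(1) vs(3) unfolding digraph_def by auto
  obtain c where "proper_colouring (set vs) A c (4 * K)"
    using main_col[OF K refl hc Asub loop] assms(6) vs(3) by blast
  then have "\<exists>c. proper_colouring V A c (4 * K)" using vs(3) by blast
  then show ?thesis unfolding chromatic_number_def K_def[symmetric] by (rule Least_le)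
qed

end
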